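(* Let $G^\sigma$ be a connected oriented unicyclic graph of order $n$ whose unique cycle $C_k^\sigma$ has length $k$, and let $\beta(G^\sigma)$ be its matching number. Then $sr(G^\sigma)=2\beta(G^\sigma)-2$ if $k$ is even, $C_k^\sigma$ is evenly-oriented and $m_{G^\sigma}(\beta(G^\sigma))=2\,m_{G^\sigma-C_k^\sigma}\big(\beta(G^\sigma)-\tfrac{k}{2}\big)$; otherwise $sr(G^\sigma)=2\beta(G^\sigma)$.
   Context: An oriented graph $G^\sigma$ is a simple graph $G$ together with an orientation of each edge. Its skew-adjacency matrix $S(G^\sigma)=(s_{ij})$ has $s_{ij}=1$ if there is an arc from $v_i$ to $v_j$, $s_{ij}=-1$ if there is an arc from $v_j$ to $v_i$, and $0$ otherwise; the skew-rank $sr(G^\sigma)$ is the rank of $S(G^\sigma)$. For an even cycle $u_1\cdots u_ku_1$, its sign is the sign of $\prod_{i=1}^k s_{u_iu_{i+1}}$ ($u_{k+1}=u_1$); the cycle is evenly-oriented if this sign is positive. $m_H(i)$ denotes the number of matchings with exactly $i$ edges in $H$, and $\beta(H)$ the matching number of $H$. $G^\sigma-C_k^\sigma$ is obtained by deleting all vertices of the cycle and their incident edges. *)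

theory Defs
  imports "HOL-Analysis.Analysis"
begin

text \<open>An oriented graph on the finite vertex type 'v is given by its set of arcs A:
  no loops and at most one orientation per edge.\<close>
definition oriented_graph :: "('v \<times> 'v) set \<Rightarrow> bool" where
  "oriented_graph A \<longleftrightarrow> (\<forall>u. (u,u) \<notin> A) \<and> (\<forall>u v. (u,v) \<in> A \<longrightarrow> (v,u) \<notin> A)"

definition edges :: "('v \<times> 'v) set \<Rightarrow> 'v set set" where
  "edges A = {{u,v} | u v. (u,v) \<in> A \<or> (v,u) \<in> A}"

definition adj :: "('v \<times> 'v) set \<Rightarrow> 'v \<Rightarrow> 'v \<Rightarrow> bool" where
  "adj A u v \<longleftrightarrow> (u,v) \<in> A \<or> (v,u) \<in> A"

definition skew_entry :: "('v \<times> 'v) set \<Rightarrow> 'v \<Rightarrow> 'v \<Rightarrow> real" where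
  "skew_entry A i j = (if (i,j) \<in> A then 1 else if (j,i) \<in> A then -1 else 0)"

definition skew_adj :: "('v::finite \<times> 'v) set \<Rightarrow> real^'v^'v" where
  "skew_adj A = (\<chi> i j. skew_entry A i j)"

definition skew_rank :: "('v::finite \<times> 'v) set \<Rightarrow> nat" where
  "skew_rank A = rank (skew_adj A)"

definition connected_graph :: "('v \<times> 'v) set \<Rightarrow> bool" where
  "connected_graph A \<longleftrightarrow> (\<forall>u v. (adj A)\<^sup>*\<^sup>* u v)"

definition is_cycle :: "('v \<times> 'v) set \<Rightarrow> 'v list \<Rightarrow> bool" where
  "is_cycle A cs \<longleftrightarrow> length cs \<ge> 3 \<and> distinct cs \<and>
     (\<forall>i < length cs. adj A (cs ! i) (cs ! ((i + 1) mod length cs)))"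

definition cycle_edges :: "'v list \<Rightarrow> 'v set set" where
  "cycle_edges cs = {{cs ! i, cs ! ((i + 1) mod length cs)} | i. i < length cs}"

text \<open>Unicyclic: connected with exactly one cycle (cycles identified by their edge sets).\<close>
definition unicyclic :: "('v \<times> 'v) set \<Rightarrow> bool" where
  "unicyclic A \<longleftrightarrow> connected_graph A \<and> (\<exists>cs. is_cycle A cs) \<and>
     (\<forall>cs cs'. is_cycle A cs \<and> is_cycle A cs' \<longrightarrow> cycle_edges cs = cycle_edges cs')"

definition evenly_oriented :: "('v \<times> 'v) set \<Rightarrow> 'v list \<Rightarrow> bool" where
  "evenly_oriented A cs \<longleftrightarrow>
     (\<Prod>i<length cs. skew_entry A (cs ! i) (cs ! ((i + 1) mod length cs))) > 0"

definition matching_in :: "('v \<times> 'v) set \<Rightarrow> 'v set \<Rightarrow> 'v set set \<Rightarrow> bool" where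
  "matching_in A W M \<longleftrightarrow> M \<subseteq> {e \<in> edges A. e \<subseteq> W} \<and>
     (\<forall>e\<in>M. \<forall>f\<in>M. e \<noteq> f \<longrightarrow> e \<inter> f = {})"

definition num_matchings :: "('v \<times> 'v) set \<Rightarrow> 'v set \<Rightarrow> nat \<Rightarrow> nat" where
  "num_matchings A W i = card {M. matching_in A W M \<and> card M = i}"

definition matching_number :: "('v \<times> 'v) set \<Rightarrow> 'v set \<Rightarrow> nat" where
  "matching_number A W = Max {card M | M. matching_in A W M}"

end

theory Submission imports Defs "HOL-Combinatorics.Cycles" begin

definition tW :: "real^'v^'v \<Rightarrow> 'v set \<Rightarrow> real^'v^'v" where
  "tW S W = (\<chi> i j. if i \<in> W \<and> j \<in> W then S$i$j else if i = j then 1 else 0)"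

lemma tW_mult_nth: "(tW S W *v x) $ i =
   (if i \<in> W then (\<Sum>j\<in>W. S$i$j * x$j) else x$i)"
proof -
  have "(tW S W *v x) $ i = (\<Sum>j\<in>UNIV. tW S W $ i $ j * x$j)"
    by (simp add: matrix_vector_mult_def)
  also have "\<dots> = (if i \<in> W then (\<Sum>j\<in>W. S$i$j * x$j) else x$i)"
  proof (cases "i \<in> W")
    case True
    then show ?thesis
      by (simp add: tW_def if_distrib[of "\<lambda>a. a * _"] sum.If_cases)
  next
    case False
    then show ?thesis by (simp add: tW_def if_distrib[of "\<lambda>a. a * _"] sum.delta' cong: if_cong)
  qed
  finally show ?thesis .
qed

lemma det_tW_nz_iff:
  "det (tW S W) \<noteq> 0 \<longleftrightarrow>
   (\<forall>x. (\<forall>i. i \<notin> W \<longrightarrow> x$i = 0) \<and> (\<forall>i\<in>W. (S *v x)$i = 0) \<longrightarrow> x = 0)"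
proof -
  have lin: "linear ((*v) (tW S W))" by simp
  have "det (tW S W) \<noteq> 0 \<longleftrightarrow> inj ((*v) (tW S W))"
    using det_nz_iff_inj[OF lin] by simp
  also have "\<dots> \<longleftrightarrow> (\<forall>x. tW S W *v x = 0 \<longrightarrow> x = 0)"
    using linear_injective_0[OF lin] by simp
  also have "\<dots> \<longleftrightarrow> (\<forall>x. (\<forall>i. i \<notin> W \<longrightarrow> x$i = 0) \<and> (\<forall>i\<in>W. (S *v x)$i = 0) \<longrightarrow> x = 0)"
  proof -
    have key: "tW S W *v x = 0 \<longleftrightarrow> (\<forall>i. i \<notin> W \<longrightarrow> x$i = 0) \<and> (\<forall>i\<in>W. (S *v x)$i = 0)" for x
    proof
      assume h: "tW S W *v x = 0"
      have 1: "\<forall>i. i \<notin> W \<longrightarrow> x$i = 0"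
        using h tW_mult_nth[of S W x] by (metis zero_index)
      have "(S *v x)$i = (\<Sum>j\<in>W. S$i$j * x$j)" for i
      proof -
        have "(S *v x)$i = (\<Sum>j\<in>UNIV. S$i$j * x$j)" by (simp add: matrix_vector_mult_def)
        also have "\<dots> = (\<Sum>j\<in>W. S$i$j * x$j)"
          by (rule sum.mono_neutral_right) (use 1 in auto)
        finally show ?thesis .
      qed
      then show "(\<forall>i. i \<notin> W \<longrightarrow> x$i = 0) \<and> (\<forall>i\<in>W. (S *v x)$i = 0)"
        using 1 h tW_mult_nth[of S W x] by (metis zero_index)
    next
      assume h: "(\<forall>i. i \<notin> W \<longrightarrow> x$i = 0) \<and> (\<forall>i\<in>W. (S *v x)$i = 0)"
      have "(S *v x)$i = (\<Sum>j\<in>W. S$i$j * x$j)" for i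
      proof -
        have "(S *v x)$i = (\<Sum>j\<in>UNIV. S$i$j * x$j)" by (simp add: matrix_vector_mult_def)
        also have "\<dots> = (\<Sum>j\<in>W. S$i$j * x$j)"
          by (rule sum.mono_neutral_right) (use h in auto)
        finally show ?thesis .
      qed
      then show "tW S W *v x = 0"
        using h by (simp add: vec_eq_iff tW_mult_nth)
    qed
    show ?thesis using key by simp
  qed
  finally show ?thesis .
qed

lemma span_support_sub:
  "span ((\<lambda>j. axis j 1) ` W) \<subseteq> {x::real^'v. \<forall>i. i \<notin> W \<longrightarrow> x$i = 0}"
proof (rule real_vector.span_minimal)
  show "(\<lambda>j. axis j 1) ` W \<subseteq> {x::real^'v. \<forall>i. i \<notin> W \<longrightarrow> x$i = 0}"
    by (auto simp: axis_def)
  show "subspace {x::real^'v. \<forall>i. i \<notin> W \<longrightarrow> x$i = 0}"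
    by (auto simp: subspace_def)
qed

lemma det_tW_card_le_rank:
  fixes S :: "real^'v^'v"
  assumes "det (tW S W) \<noteq> 0"
  shows "card W \<le> rank S"
proof -
  let ?B = "(\<lambda>j. axis j (1::real)) ` W"
  have indB: "independent ?B"
    by (rule real_vector.independent_mono[OF independent_Basis]) (auto simp: axis_in_Basis_iff)
  have crit: "\<forall>x. (\<forall>i. i \<notin> W \<longrightarrow> x$i = 0) \<and> (\<forall>i\<in>W. (S *v x)$i = 0) \<longrightarrow> x = 0"
    using assms det_tW_nz_iff by blast
  have inj: "inj_on ((*v) S) (span ?B)"
  proof (rule inj_onI)
    fix x y assume x: "x \<in> span ?B" and y: "y \<in> span ?B" and e: "S *v x = S *v y"
    have sup: "\<forall>i. i \<notin> W \<longrightarrow> (x - y)$i = 0"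
      using subsetD[OF span_support_sub[of W] x] subsetD[OF span_support_sub[of W] y] by auto
    have "S *v (x - y) = 0" using e by (simp add: matrix_vector_mult_diff_distrib)
    then have "x - y = 0"
      using crit[rule_format, of "x - y"] sup by simp
    then show "x = y" by simp
  qed
  have ind2: "independent ((*v) S ` ?B)"
    by (rule real_vector.linear_independent_injective_image[OF _ indB inj]) simp
  have "card ((*v) S ` ?B) = card ?B"
    by (rule card_image) (rule inj_on_subset[OF inj real_vector.span_superset])
  also have "card ?B = card W"
    by (rule card_image) (auto simp: inj_on_def axis_eq_axis)
  finally have "card W = card ((*v) S ` ?B)" by simp
  also have "\<dots> \<le> dim (range (\<lambda>x. S *v x))"
    by (rule independent_card_le_dim[OF _ ind2]) auto
  also have "\<dots> = rank S" by (simp add: rank_dim_range)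
  finally show ?thesis .
qed

lemma skew_mult_nth:
  fixes S :: "real^'v^'v"
  assumes skew: "\<And>i j. S$i$j = - S$j$i"
  shows "(S *v x)$j = - (column j S \<bullet> x)"
proof -
  have "(S *v x)$j = (\<Sum>l\<in>UNIV. S$j$l * x$l)" by (simp add: matrix_vector_mult_def)
  also have "\<dots> = - (\<Sum>l\<in>UNIV. S$l$j * x$l)"
    by (simp add: skew[of j] sum_negf[symmetric])
  also have "\<dots> = - (column j S \<bullet> x)"
    by (simp add: inner_vec_def column_def)
  finally show ?thesis .
qed

lemma skew_rank_witness:
  fixes S :: "real^'v^'v"
  assumes skew: "\<And>i j. S$i$j = - S$j$i"
  shows "\<exists>W. card W = rank S \<and> det (tW S W) \<noteq> 0"
proof -
  obtain B where B: "B \<subseteq> columns S" "independent B" "columns S \<subseteq> span B"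
    using real_vector.maximal_independent_subset[of "columns S"] by blast
  have cardB: "card B = rank S"
    using real_vector.basis_card_eq_dim[OF B(1) B(3) B(2)] by (simp add: column_rank_def)
  define g where "g b = (SOME j. column j S = b)" for b
  have gcol: "column (g b) S = b" if "b \<in> B" for b
  proof -
    have "\<exists>j. column j S = b" using that B(1) by (auto simp: columns_def)
    then show ?thesis unfolding g_def by (rule someI_ex)
  qed
  have ginj: "inj_on g B"
    by (rule inj_onI) (metis gcol)
  define W where "W = g ` B"
  have cardW: "card W = rank S"
    using cardB card_image[OF ginj] W_def by simp
  have "det (tW S W) \<noteq> 0"
    unfolding det_tW_nz_iff
  proof (intro allI impI)
    fix x :: "real^'v"
    assume h: "(\<forall>i. i \<notin> W \<longrightarrow> x$i = 0) \<and> (\<forall>i\<in>W. (S *v x)$i = 0)"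
    have orthB: "orthogonal x b" if "b \<in> B" for b
    proof -
      have "(S *v x) $ (g b) = 0" using h that W_def by auto
      then have "column (g b) S \<bullet> x = 0" using skew_mult_nth[OF skew] by (metis neg_equal_0_iff_equal)
      then show ?thesis using gcol[OF that] by (simp add: orthogonal_def inner_commute)
    qed
    have Sx0: "S *v x = 0"
    proof -
      have "(S *v x)$j = 0" for j
      proof -
        have "column j S \<in> span B" using B(3) by (auto simp: columns_def)
        then have "orthogonal x (column j S)"
          by (rule orthogonal_to_span) (use orthB in auto)
        then show ?thesis using skew_mult_nth[OF skew, of x j]
          by (simp add: orthogonal_def inner_commute)
      qed
      then show ?thesis by (simp add: vec_eq_iff)
    qed
    have "S *v x = (\<Sum>i\<in>UNIV. x$i *s column i S)" by (rule matrix_mult_sum)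
    also have "\<dots> = (\<Sum>i\<in>W. x$i *s column i S)"
      by (rule sum.mono_neutral_right) (use h in auto)
    also have "\<dots> = (\<Sum>b\<in>B. x$(g b) *s column (g b) S)"
      unfolding W_def by (rule sum.reindex[OF ginj, unfolded comp_def])
    also have "\<dots> = (\<Sum>b\<in>B. x$(g b) *\<^sub>R b)"
      by (rule sum.cong) (auto simp: gcol scalar_mult_eq_scaleR)
    finally have "(\<Sum>b\<in>B. x$(g b) *\<^sub>R b) = 0" using Sx0 by simp
    then have "\<forall>b\<in>B. x$(g b) = 0"
    proof -
      have "\<forall>c. (\<Sum>v\<in>B. c v *\<^sub>R v) = 0 \<longrightarrow> (\<forall>v\<in>B. c v = 0)"
        using B(2) unfolding eucl.independent_explicit by blast
      from this[rule_format, of "\<lambda>b. x$(g b)"] show ?thesis using \<open>(\<Sum>b\<in>B. x$(g b) *\<^sub>R b) = 0\<close> by blast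
    qed
    then show "x = 0"
      using h unfolding vec_eq_iff W_def by (metis imageE zero_index)
  qed
  then show ?thesis using cardW by blast
qed




lemma skew_adj_nth[simp]: "skew_adj A $ i $ j = skew_entry A i j"
  by (simp add: skew_adj_def)

lemma adj_sym: "adj A i j = adj A j i"
  by (auto simp: adj_def)

lemma skew_antisym: "oriented_graph A \<Longrightarrow> skew_entry A j i = - skew_entry A i j"
  by (auto simp: skew_entry_def oriented_graph_def)

lemma skew_nz_iff: "skew_entry A i j \<noteq> 0 \<longleftrightarrow> adj A i j"
  by (auto simp: skew_entry_def adj_def)

lemma adj_irrefl: "oriented_graph A \<Longrightarrow> \<not> adj A i i"
  by (auto simp: oriented_graph_def adj_def)

lemma skew_pair: "oriented_graph A \<Longrightarrow> adj A i j \<Longrightarrow> skew_entry A i j * skew_entry A j i = -1"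
  by (auto simp: skew_entry_def oriented_graph_def adj_def)

definition PP :: "('v \<times> 'v) set \<Rightarrow> 'v set \<Rightarrow> ('v \<Rightarrow> 'v) set" where
  "PP A W = {p. p permutes W \<and> (\<forall>i\<in>W. adj A i (p i))}"

definition II :: "('v \<times> 'v) set \<Rightarrow> 'v set \<Rightarrow> ('v \<Rightarrow> 'v) set" where
  "II A W = {p \<in> PP A W. \<forall>i. p (p i) = i}"

lemma det_tW_expand:
  fixes A :: "('v::finite \<times> 'v) set"
  shows "det (tW (skew_adj A) W) =
    (\<Sum>p\<in>PP A W. of_int (sign p) * (\<Prod>i\<in>W. skew_entry A i (p i)))"
proof -
  let ?M = "tW (skew_adj A) W"
  have "det ?M = (\<Sum>p\<in>{p. p permutes (UNIV::'v set)}. of_int (sign p) * (\<Prod>i\<in>UNIV. ?M$i$(p i)))"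
    by (simp add: det_def)
  also have "\<dots> = (\<Sum>p\<in>PP A W. of_int (sign p) * (\<Prod>i\<in>UNIV. ?M$i$(p i)))"
  proof (rule sum.mono_neutral_right)
    show "finite {p. p permutes (UNIV::'v set)}" by (simp add: finite_permutations)
    show "PP A W \<subseteq> {p. p permutes UNIV}"
      by (auto simp: PP_def intro: permutes_subset)
    show "\<forall>p\<in>{p. p permutes UNIV} - PP A W. of_int (sign p) * (\<Prod>i\<in>UNIV. ?M$i$(p i)) = 0"
    proof
      fix p assume p: "p \<in> {p. p permutes (UNIV::'v set)} - PP A W"
      have "\<exists>i. ?M$i$(p i) = 0"
      proof (cases "\<exists>i. i \<notin> W \<and> p i \<noteq> i")
        case True
        then obtain i where "i \<notin> W" "p i \<noteq> i" by blast
        then show ?thesis by (intro exI[of _ i]) (simp add: tW_def)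
      next
        case False
        then have pW: "p permutes W"
          using p permutes_superset[of p UNIV W] by auto
        then obtain i where i: "i \<in> W" "\<not> adj A i (p i)" using p by (auto simp: PP_def)
        have "p i \<in> W" using pW i(1) by (simp add: permutes_in_image)
        then show ?thesis using i skew_nz_iff[of A i "p i"]
          by (intro exI[of _ i]) (simp add: tW_def)
      qed
      then show "of_int (sign p) * (\<Prod>i\<in>UNIV. ?M$i$(p i)) = 0"
        by (auto simp: prod_zero_iff)
    qed
  qed
  also have "\<dots> = (\<Sum>p\<in>PP A W. of_int (sign p) * (\<Prod>i\<in>W. skew_entry A i (p i)))"
  proof (rule sum.cong[OF refl])
    fix p assume "p \<in> PP A W"
    then have pW: "p permutes W" by (simp add: PP_def)
    have "(\<Prod>i\<in>UNIV. ?M$i$(p i)) = (\<Prod>i\<in>W. ?M$i$(p i))"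
      by (rule prod.mono_neutral_right) (use pW in \<open>auto simp: tW_def permutes_not_in\<close>)
    also have "\<dots> = (\<Prod>i\<in>W. skew_entry A i (p i))"
      by (rule prod.cong) (use pW in \<open>auto simp: tW_def permutes_in_image\<close>)
    finally show "of_int (sign p) * (\<Prod>i\<in>UNIV. ?M$i$(p i)) =
       of_int (sign p) * (\<Prod>i\<in>W. skew_entry A i (p i))" by simp
  qed
  finally show ?thesis .
qed

lemma II_value:
  assumes og: "oriented_graph A" and fin: "finite W" and p: "p \<in> II A W"
  shows "of_int (sign p) * (\<Prod>i\<in>W. skew_entry A i (p i)) = (1::real)"
  using fin p
proof (induction "card W" arbitrary: W p rule: less_induct)
  case less
  show ?case
  proof (cases "W = {}")
    case True
    then have "p = id" using less.prems by (simp add: II_def PP_def permutes_empty)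
    then show ?thesis using True by simp
  next
    case False
    then obtain u where u: "u \<in> W" by blast
    have pW: "p permutes W" and padj: "\<forall>i\<in>W. adj A i (p i)" and inv: "\<forall>i. p (p i) = i"
      using less.prems by (auto simp: II_def PP_def)
    define v where "v = p u"
    have vW: "v \<in> W" using pW u by (simp add: v_def permutes_in_image)
    have uv: "u \<noteq> v" using padj u adj_irrefl[OF og] v_def by metis
    have pv: "p v = u" using inv v_def by simp
    define W' where "W' = W - {u, v}"
    define q where "q = Transposition.transpose u v \<circ> p"
    have pW': "p i \<in> W'" if "i \<in> W'" for i
    proof -
      have "p i \<noteq> u" using that inv pv W'_def by (metis insert_iff Diff_iff)
      moreover have "p i \<noteq> v" using that inv v_def W'_def by (metis insert_iff Diff_iff)
      ultimately show ?thesis using that pW W'_def permutes_in_image by fastforce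
    qed
    have qeq: "q i = p i" if "i \<in> W'" for i
      using pW'[OF that] W'_def by (auto simp: q_def transpose_def)
    have qperm: "q permutes W'"
    proof -
      have "q permutes W"
        unfolding q_def by (rule permutes_compose[OF pW permutes_swap_id[OF u vW]])
      moreover have "\<forall>x\<in>W - W'. q x = x"
        using pv v_def by (auto simp: W'_def q_def transpose_def)
      ultimately show ?thesis by (intro permutes_superset[of q W W']) auto
    qed
    have qII: "q \<in> II A W'"
    proof -
      have "\<forall>i\<in>W'. adj A i (q i)" using padj qeq W'_def by auto
      moreover have "q (q i) = i" for i
      proof (cases "i \<in> W'")
        case True then show ?thesis using qeq pW' inv by metis
      next
        case False then show ?thesis using qperm by (simp add: permutes_not_in)
      qed
      ultimately show ?thesis using qperm by (simp add: II_def PP_def)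
    qed
    have finW': "finite W'" using less.prems W'_def by simp
    have card_lt: "card W' < card W"
      using less.prems(1) u W'_def by (intro psubset_card_mono) auto
    have IH: "of_int (sign q) * (\<Prod>i\<in>W'. skew_entry A i (q i)) = (1::real)"
      using less.hyps[OF card_lt finW' qII] .
    have pq: "p = Transposition.transpose u v \<circ> q"
      by (simp add: q_def fun_eq_iff)
    have sgn: "sign p = - sign q"
    proof -
      have "permutation q" using qperm finW' permutation_permutes by blast
      then show ?thesis using pq uv by (simp add: sign_compose permutation_swap_id sign_swap_id)
    qed
    have Wsplit: "W = {u, v} \<union> W'" using u vW W'_def by auto
    have "(\<Prod>i\<in>W. skew_entry A i (p i)) =
          (\<Prod>i\<in>{u,v}. skew_entry A i (p i)) * (\<Prod>i\<in>W'. skew_entry A i (p i))"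
      by (subst Wsplit, rule prod.union_disjoint) (use less.prems(1) in \<open>auto simp: W'_def\<close>)
    also have "(\<Prod>i\<in>{u,v}. skew_entry A i (p i)) = -1"
      using uv pv v_def skew_pair[OF og, of u v] padj u by simp
    also have "(\<Prod>i\<in>W'. skew_entry A i (p i)) = (\<Prod>i\<in>W'. skew_entry A i (q i))"
      by (rule prod.cong) (auto simp: qeq)
    finally show ?thesis using IH sgn by simp
  qed
qed




lemma sign_cycle_of_list:
  "distinct L \<Longrightarrow> L \<noteq> [] \<Longrightarrow> sign (cycle_of_list L) = (-1) ^ (length L - 1)"
proof (induction L rule: cycle_of_list.induct)
  case (1 i j cs)
  have e: "cycle_of_list (i # j # cs) = Transposition.transpose i j \<circ> cycle_of_list (j # cs)"
    by simp
  have "sign (cycle_of_list (i # j # cs)) =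
        sign (Transposition.transpose i j) * sign (cycle_of_list (j # cs))"
    unfolding e by (rule sign_compose[OF permutation_swap_id permutation_of_cycle])
  also have "\<dots> = (-1) * (-1) ^ (length cs)"
    using 1 by (simp add: sign_swap_id)
  finally show ?case by (simp del: cycle_of_list.simps)
next
  case "2_1" then show ?case by simp
next
  case ("2_2" v) then show ?case by simp
qed

lemma cycle_edges_vertices:
  assumes "length L \<ge> 2"
  shows "\<Union> (cycle_edges L) = set L"
proof
  show "\<Union> (cycle_edges L) \<subseteq> set L"
    using assms by (auto simp: cycle_edges_def intro!: nth_mem mod_less_divisor)
next
  show "set L \<subseteq> \<Union> (cycle_edges L)"
  proof
    fix y assume "y \<in> set L"
    then obtain i where i: "i < length L" "y = L ! i" by (auto simp: in_set_conv_nth)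
    then have "{L!i, L!((i+1) mod length L)} \<in> cycle_edges L"
      by (auto simp: cycle_edges_def)
    then show "y \<in> \<Union> (cycle_edges L)" using i by auto
  qed
qed

lemma permutes_involution:
  assumes "\<And>x. q (q x) = x" and "\<And>x. x \<notin> S \<Longrightarrow> q x = x"
  shows "q permutes S"
  unfolding permutes_def using assms by metis

locale uc =
  fixes A :: "('v::finite \<times> 'v) set" and cs :: "'v list"
  assumes og: "oriented_graph A" and uni: "unicyclic A" and cyc: "is_cycle A cs"
begin

abbreviation "k \<equiv> length cs"
abbreviation "C \<equiv> set cs"
abbreviation "cf \<equiv> cycle_of_list cs"
abbreviation "cb \<equiv> cycle_of_list (rev cs)"
definition eps :: real where
  "eps = (\<Prod>i<length cs. skew_entry A (cs ! i) (cs ! ((i + 1) mod length cs)))"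

lemma k3: "k \<ge> 3" and dist: "distinct cs"
  using cyc by (auto simp: is_cycle_def)

lemma kpos: "0 < k" and csne: "cs \<noteq> []"
  using k3 by auto

lemma cf_perm: "cf permutes C" and cb_perm: "cb permutes C"
  using cycle_permutes[of cs] cycle_permutes[of "rev cs"] by auto

lemma cf_pow_nth: "i < k \<Longrightarrow> (cf ^^ n) (cs ! i) = cs ! ((n + i) mod k)"
proof -
  assume i: "i < k"
  have "map (cf ^^ n) cs = rotate n cs" by (rule cyclic_rotation[OF dist])
  then have "(cf ^^ n) (cs ! i) = rotate n cs ! i"
    using i by (metis nth_map)
  also have "\<dots> = cs ! ((n + i) mod k)" using i by (simp add: nth_rotate)
  finally show ?thesis .
qed

lemma cf_nth: "i < k \<Longrightarrow> cf (cs ! i) = cs ! ((i + 1) mod k)"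
  using cf_pow_nth[of i 1] by simp

lemma cb_nth: assumes j: "j < k" shows "cb (cs ! ((j + 1) mod k)) = cs ! j"
proof -
  have dr: "distinct (rev cs)" using dist by simp
  have rot: "cb (rev cs ! i) = rev cs ! ((i + 1) mod k)" if "i < k" for i
  proof -
    have "map (cycle_of_list (rev cs) ^^ 1) (rev cs) = rotate 1 (rev cs)"
      by (rule cyclic_rotation[OF dr])
    then have m: "map cb (rev cs) = rotate1 (rev cs)" by simp
    have "cb (rev cs ! i) = rotate1 (rev cs) ! i"
      using that m by (metis length_rev nth_map)
    also have "\<dots> = rev cs ! (Suc i mod k)" using that by (simp add: nth_rotate1)
    finally show ?thesis by simp
  qed
  show ?thesis
  proof (cases "j + 1 < k")
    case True
    have "rev cs ! (k - 2 - j) = cs ! (j + 1)"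
      using True by (simp add: rev_nth)
    moreover have "rev cs ! (k - 1 - j) = cs ! j"
      using True j by (simp add: rev_nth)
    moreover have "(k - 2 - j + 1) mod k = k - 1 - j" using True by simp
    ultimately show ?thesis using rot[of "k - 2 - j"] True by simp
  next
    case False
    then have jj: "j = k - 1" using j by simp
    have "rev cs ! (k - 1) = cs ! 0" using k3 by (simp add: rev_nth)
    moreover have "rev cs ! 0 = cs ! (k - 1)" using kpos rev_nth[of 0 cs] by simp
    moreover have "((k - 1) + 1) mod k = 0" using kpos by simp
    ultimately show ?thesis using rot[of "k - 1"] jj k3 by simp
  qed
qed

lemma cb_cf: "y \<in> C \<Longrightarrow> cb (cf y) = y"
proof -
  assume "y \<in> C"
  then obtain i where i: "i < k" "y = cs ! i" by (auto simp: in_set_conv_nth)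
  then show ?thesis using cf_nth[OF i(1)] cb_nth[OF i(1)] by simp
qed

lemma cf_cb: "y \<in> C \<Longrightarrow> cf (cb y) = y"
proof -
  assume y: "y \<in> C"
  then obtain z where z: "z \<in> C" "y = cf z"
    using cycle_is_surj[OF dist] by auto
  then show ?thesis using cb_cf by simp
qed

lemma cf_in: "y \<in> C \<Longrightarrow> cf y \<in> C" and cb_in: "y \<in> C \<Longrightarrow> cb y \<in> C"
  using cf_perm cb_perm by (auto simp: permutes_in_image)

lemma cf_cf_ne: "y \<in> C \<Longrightarrow> cf (cf y) \<noteq> y"
proof -
  assume "y \<in> C"
  then obtain i where i: "i < k" "y = cs ! i" by (auto simp: in_set_conv_nth)
  have "cf (cf y) = (cf ^^ 2) y" by (simp add: numeral_2_eq_2)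
  also have "\<dots> = cs ! ((2 + i) mod k)" using cf_pow_nth i by simp
  finally have e: "cf (cf y) = cs ! ((2 + i) mod k)" .
  have "(2 + i) mod k \<noteq> i"
  proof (cases "2 + i < k")
    case True then show ?thesis by simp
  next
    case False
    then have "(2 + i) mod k = (2 + i - k) mod k" by (simp add: le_mod_geq)
    also have "\<dots> = 2 + i - k" using i False k3 by (intro mod_less) linarith
    finally show ?thesis using False k3 by linarith
  qed
  moreover have "(2 + i) mod k < k" using kpos by simp
  ultimately show ?thesis using e i nth_eq_iff_index_eq[OF dist] by auto
qed

lemma cf_ne_cb: "y \<in> C \<Longrightarrow> cf y \<noteq> cb y"
  using cf_cf_ne cf_cb by metis

lemma cb_cb_ne: "y \<in> C \<Longrightarrow> cb (cb y) \<noteq> y"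
  by (metis cf_cb cb_in cf_ne_cb)

lemma adj_cf: "y \<in> C \<Longrightarrow> adj A y (cf y)"
  using cyc by (auto simp: is_cycle_def in_set_conv_nth cf_nth)

lemma adj_cb: "y \<in> C \<Longrightarrow> adj A y (cb y)"
  using adj_cf[of "cb y"] cf_cb cb_in by (metis adj_def)

lemma nbr: assumes y: "y \<in> C" and e: "{y, z} \<in> cycle_edges cs"
  shows "z = cf y \<or> z = cb y"
proof -
  obtain i where i: "i < k" "{y, z} = {cs ! i, cs ! ((i + 1) mod k)}"
    using e by (auto simp: cycle_edges_def)
  then have "(y = cs ! i \<and> z = cs ! ((i + 1) mod k)) \<or> (y = cs ! ((i + 1) mod k) \<and> z = cs ! i)"
    by (auto simp: doubleton_eq_iff)
  then show ?thesis using i cf_nth cb_nth by auto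
qed

lemma sign_cf: "sign cf = (-1) ^ (k - 1)" and sign_cb: "sign cb = (-1) ^ (k - 1)"
  using sign_cycle_of_list[of cs] sign_cycle_of_list[of "rev cs"] dist csne by auto

lemma prod_cf: "(\<Prod>y\<in>C. skew_entry A y (cf y)) = eps"
proof -
  have C: "C = (\<lambda>i. cs ! i) ` {..<k}" by (auto simp: in_set_conv_nth)
  have inj: "inj_on (\<lambda>i. cs ! i) {..<k}" using inj_on_nth[OF dist] by auto
  have "(\<Prod>y\<in>C. skew_entry A y (cf y)) = (\<Prod>i<k. skew_entry A (cs ! i) (cf (cs ! i)))"
    by (subst C, subst prod.reindex[OF inj]) simp
  also have "\<dots> = eps" unfolding eps_def by (rule prod.cong) (auto simp: cf_nth)
  finally show ?thesis .
qed

lemma prod_cb: "(\<Prod>y\<in>C. skew_entry A y (cb y)) = (-1) ^ k * eps"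
proof -
  have bij: "bij_betw cf C C" using cf_perm by (rule permutes_imp_bij)
  have "(\<Prod>y\<in>C. skew_entry A y (cb y)) = (\<Prod>y\<in>C. skew_entry A (cf y) (cb (cf y)))"
    using prod.reindex_bij_betw[OF bij, of "\<lambda>y. skew_entry A y (cb y)"] by simp
  also have "\<dots> = (\<Prod>y\<in>C. - skew_entry A y (cf y))"
  proof (rule prod.cong[OF refl])
    fix y assume "y \<in> C"
    then show "skew_entry A (cf y) (cb (cf y)) = - skew_entry A y (cf y)"
      using cb_cf skew_antisym[OF og, of "cf y" y] by simp
  qed
  also have "\<dots> = (-1) ^ card C * (\<Prod>y\<in>C. skew_entry A y (cf y))"
    by (rule prod_uminus)
  also have "\<dots> = (-1) ^ k * eps"
    using prod_cf distinct_card[OF dist] by simp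
  finally show ?thesis .
qed

end



context uc begin

lemma orb:
  assumes p: "p \<in> PP A W" and x: "p (p x) \<noteq> x"
  shows "\<exists>L. is_cycle A L \<and> x \<in> set L \<and> set L \<subseteq> W \<and>
            (\<forall>y\<in>set L. {y, p y} \<in> cycle_edges L \<and> p (p y) \<noteq> y)"
proof -
  have pW: "p permutes W" and padj: "\<forall>i\<in>W. adj A i (p i)" using p by (auto simp: PP_def)
  have fW: "finite W" by simp
  have perm: "permutation p" using pW fW permutation_permutes by blast
  have px: "p x \<noteq> x" using x by auto
  have xW: "x \<in> W"
  proof (rule ccontr)
    assume "x \<notin> W"
    then have "p x = x" by (rule permutes_not_in[OF pW])
    then show False using px by simp
  qed
  define m where "m = least_power p x"
  define L where "L = support p x"
  have m1: "m > 1" using least_power_gt_one[OF perm px] m_def by simp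
  have pm: "(p ^^ m) x = x" using least_power_of_permutation(1)[OF perm] m_def by simp
  have p2: "(p ^^ 2) x = p (p x)" by (simp add: numeral_2_eq_2)
  have m3: "m \<ge> 3"
  proof (rule ccontr)
    assume "\<not> m \<ge> 3"
    then have "m = 2" using m1 by simp
    then show False using pm p2 x by simp
  qed
  have len: "length L = m" by (simp add: L_def m_def)
  have nth: "L ! i = (p ^^ i) x" if "i < m" for i using that by (simp add: L_def m_def)
  have dL: "distinct L" using cycle_of_permutation[OF perm] L_def by simp
  have step: "L ! ((i + 1) mod m) = p (L ! i)" if i: "i < m" for i
  proof (cases "i + 1 < m")
    case True
    then show ?thesis using nth i by simp
  next
    case False
    then have "i + 1 = m" using i by simp
    then have "(i + 1) mod m = 0" by simp
    then have "L ! ((i + 1) mod m) = x" using nth m1 by simp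
    also have "x = (p ^^ (Suc i)) x" using pm \<open>i + 1 = m\<close> by simp
    also have "\<dots> = p (L ! i)" using nth i by simp
    finally show ?thesis .
  qed
  have inW: "(p ^^ i) x \<in> W" for i
    by (induction i) (simp_all add: xW permutes_in_image[OF pW])
  have setL: "set L \<subseteq> W" using inW by (auto simp: L_def)
  have cycL: "is_cycle A L"
    unfolding is_cycle_def
  proof (intro conjI allI impI)
    show "3 \<le> length L" using m3 len by simp
    show "distinct L" by (rule dL)
    fix i assume "i < length L"
    then have i: "i < m" using len by simp
    have "L ! i \<in> W" using nth[OF i] inW by simp
    then show "adj A (L ! i) (L ! ((i + 1) mod length L))"
      using step[OF i] padj len by simp
  qed
  have xL: "x \<in> set L"
  proof -
    have "L ! 0 = x" using nth m1 by simp
    moreover have "0 < length L" using m1 len by simp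
    ultimately show ?thesis using nth_mem[of 0 L] by simp
  qed
  have props: "\<forall>y\<in>set L. {y, p y} \<in> cycle_edges L \<and> p (p y) \<noteq> y"
  proof
    fix y assume "y \<in> set L"
    then obtain i where i: "i < m" "y = L ! i" using len by (auto simp: in_set_conv_nth)
    have "{y, p y} = {L ! i, L ! ((i + 1) mod length L)}" using step[OF i(1)] i len by simp
    then have e: "{y, p y} \<in> cycle_edges L" using i len by (auto simp: cycle_edges_def)
    have ne: "p (p y) \<noteq> y"
    proof
      assume h: "p (p y) = y"
      have "(p ^^ i) (p (p x)) = p (p ((p ^^ i) x))" by (simp add: funpow_swap1)
      also have "\<dots> = (p ^^ i) x" using h i nth by simp
      finally have "(p ^^ i) (p (p x)) = (p ^^ i) x" .
      moreover have "inj (p ^^ i)" using permutes_inj[OF permutes_funpow[OF pW]] .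
      ultimately have "p (p x) = x" using injD by fast
      then show False using x by simp
    qed
    show "{y, p y} \<in> cycle_edges L \<and> p (p y) \<noteq> y" using e ne by simp
  qed
  show ?thesis using cycL xL setL props by blast
qed

lemma orb_C:
  assumes p: "p \<in> PP A W" and x: "p (p x) \<noteq> x"
  shows "x \<in> C" "C \<subseteq> W" "\<forall>y\<in>C. (p y = cf y \<or> p y = cb y) \<and> p (p y) \<noteq> y"
proof -
  obtain L where L: "is_cycle A L" "x \<in> set L" "set L \<subseteq> W"
    "\<forall>y\<in>set L. {y, p y} \<in> cycle_edges L \<and> p (p y) \<noteq> y"
    using orb[OF p x] by blast
  have ce: "cycle_edges L = cycle_edges cs"
  proof -
    have "\<forall>cs cs'. is_cycle A cs \<and> is_cycle A cs' \<longrightarrow> cycle_edges cs = cycle_edges cs'"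
      using uni unfolding unicyclic_def by blast
    then show ?thesis using L(1) cyc by blast
  qed
  have "set L = \<Union>(cycle_edges L)"
  proof -
    have "length L \<ge> 2" using L(1) unfolding is_cycle_def by linarith
    then show ?thesis by (rule cycle_edges_vertices[symmetric])
  qed
  also have "\<dots> = \<Union>(cycle_edges cs)" using ce by simp
  also have "\<dots> = C" using k3 by (intro cycle_edges_vertices) linarith
  finally have sL: "set L = C" .
  show "x \<in> C" using sL L(2) by simp
  show "C \<subseteq> W" using sL L(3) by simp
  show "\<forall>y\<in>C. (p y = cf y \<or> p y = cb y) \<and> p (p y) \<noteq> y"
  proof
    fix y assume yC: "y \<in> C"
    then have yL: "y \<in> set L" using sL by simp
    then have "{y, p y} \<in> cycle_edges cs" using L(4) ce by blast
    then have "p y = cf y \<or> p y = cb y" using nbr[OF yC] by blast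
    moreover have "p (p y) \<noteq> y" using L(4) yL by blast
    ultimately show "(p y = cf y \<or> p y = cb y) \<and> p (p y) \<noteq> y" by blast
  qed
qed

lemma str:
  assumes p: "p \<in> PP A W" and ni: "\<not> (\<forall>i. p (p i) = i)"
  shows "C \<subseteq> W \<and> (\<exists>q\<in>II A (W - C). p = cf \<circ> q \<or> p = cb \<circ> q)"
proof -
  have pW: "p permutes W" and padj: "\<forall>i\<in>W. adj A i (p i)" using p by (auto simp: PP_def)
  obtain x where x: "p (p x) \<noteq> x" using ni by blast
  have CW: "C \<subseteq> W" and H: "\<forall>y\<in>C. (p y = cf y \<or> p y = cb y) \<and> p (p y) \<noteq> y"
    using orb_C[OF p x] by auto
  have all: "(\<forall>y\<in>C. p y = cf y) \<or> (\<forall>y\<in>C. p y = cb y)"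
  proof (cases "\<exists>y0\<in>C. p y0 = cf y0")
    case True
    then obtain y0 where y0: "y0 \<in> C" "p y0 = cf y0" by blast
    have inC: "(cf ^^ n) y0 \<in> C" for n
      using permutes_in_image[OF permutes_funpow[OF cf_perm, of n]] y0(1) by simp
    have it: "p ((cf ^^ n) y0) = cf ((cf ^^ n) y0)" for n
    proof (induction n)
      case 0 then show ?case using y0 by simp
    next
      case (Suc n)
      define z where "z = (cf ^^ n) y0"
      have zC: "z \<in> C" using inC z_def by simp
      have pz: "p z = cf z" using Suc z_def by simp
      define w where "w = cf z"
      have wC: "w \<in> C" using cf_in[OF zC] w_def by simp
      have "p w = cf w \<or> p w = cb w" using H wC by blast
      moreover have "cb w = z" using cb_cf[OF zC] w_def by simp
      moreover have "p (p z) \<noteq> z" using H zC by blast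
      ultimately have "p w = cf w" using pz w_def by auto
      then show ?case using z_def w_def by simp
    qed
    have "\<forall>y\<in>C. p y = cf y"
    proof
      fix y assume "y \<in> C"
      then obtain j where j: "j < k" "y = cs ! j" by (auto simp: in_set_conv_nth)
      obtain i where i: "i < k" "y0 = cs ! i" using y0(1) by (auto simp: in_set_conv_nth)
      have "(cf ^^ (j + k - i)) y0 = cs ! ((j + k - i + i) mod k)"
        using cf_pow_nth[OF i(1)] i(2) by simp
      also have "(j + k - i + i) mod k = j" using i(1) j(1) by simp
      finally have "(cf ^^ (j + k - i)) y0 = y" using j by simp
      then show "p y = cf y" using it[of "j + k - i"] by simp
    qed
    then show ?thesis by simp
  next
    case False
    then show ?thesis using H by blast
  qed
  have inv_out: "p (p y) = y" if "y \<notin> C" for y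
  proof (rule ccontr)
    assume "p (p y) \<noteq> y"
    then show False using orb_C(1)[OF p] that by blast
  qed
  have pC: "p y \<in> C" if "y \<in> C" for y
    using all that cf_in cb_in by auto
  have out: "p y \<notin> C" if "y \<notin> C" for y
  proof
    assume "p y \<in> C"
    then have "p (p y) \<in> C" by (rule pC)
    then show False using inv_out[OF that] that by simp
  qed
  define q where "q y = (if y \<in> C then y else p y)" for y
  have qinv: "q (q y) = y" for y
    using inv_out out by (auto simp: q_def)
  have qperm: "q permutes (W - C)"
  proof (rule permutes_involution[OF qinv])
    fix y assume "y \<notin> W - C"
    then show "q y = y" using pW by (auto simp: q_def permutes_not_in)
  qed
  have qII: "q \<in> II A (W - C)"
    using qperm qinv padj by (auto simp: II_def PP_def q_def)
  have "p = cf \<circ> q \<or> p = cb \<circ> q"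
  proof (cases "\<forall>y\<in>C. p y = cf y")
    case True
    have "p y = (cf \<circ> q) y" for y
      using True out[of y] by (auto simp: q_def id_outside_supp)
    then show ?thesis by blast
  next
    case False
    then have T: "\<forall>y\<in>C. p y = cb y" using all by blast
    have "p y = (cb \<circ> q) y" for y
      using T out[of y] by (auto simp: q_def id_outside_supp)
    then show ?thesis by blast
  qed
  then show ?thesis using CW qII by blast
qed

lemma conv:
  assumes CW: "C \<subseteq> W" and q: "q \<in> II A (W - C)" and c: "c = cf \<or> c = cb"
  shows "c \<circ> q \<in> PP A W" "\<not> (\<forall>i. (c \<circ> q) ((c \<circ> q) i) = i)"
    "of_int (sign (c \<circ> q)) * (\<Prod>i\<in>W. skew_entry A i ((c \<circ> q) i))
       = of_int (sign c) * (\<Prod>y\<in>C. skew_entry A y (c y))"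
proof -
  have cperm: "c permutes C" using c cf_perm cb_perm by auto
  have adjc: "adj A y (c y)" if "y \<in> C" for y using c that adj_cf adj_cb by auto
  have cc: "c (c y) \<noteq> y" if "y \<in> C" for y using c that cf_cf_ne cb_cb_ne by auto
  have qperm: "q permutes (W - C)" and qadj: "\<forall>i\<in>W - C. adj A i (q i)"
    using q by (auto simp: II_def PP_def)
  have qC: "q y = y" if "y \<in> C" for y using qperm that by (simp add: permutes_not_in)
  have cout: "c y = y" if "y \<notin> C" for y using cperm that by (simp add: permutes_not_in)
  have pperm: "c \<circ> q permutes W"
    by (rule permutes_compose[OF permutes_subset[OF qperm] permutes_subset[OF cperm CW]]) auto
  have padj: "\<forall>i\<in>W. adj A i ((c \<circ> q) i)"
  proof
    fix i assume iW: "i \<in> W"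
    show "adj A i ((c \<circ> q) i)"
    proof (cases "i \<in> C")
      case True then show ?thesis using qC adjc by simp
    next
      case False
      then have "q i \<in> W - C" using iW permutes_in_image[OF qperm] by simp
      then show ?thesis using cout qadj iW False by simp
    qed
  qed
  show "c \<circ> q \<in> PP A W" using pperm padj by (simp add: PP_def)
  have c0: "cs ! 0 \<in> C" using kpos by simp
  have "(c \<circ> q) ((c \<circ> q) (cs ! 0)) = c (c (cs ! 0))"
    using qC[OF c0] qC[of "c (cs ! 0)"] permutes_in_image[OF cperm] c0 by simp
  then show "\<not> (\<forall>i. (c \<circ> q) ((c \<circ> q) i) = i)" using cc[OF c0] by force
  have permc: "permutation c" using cperm permutation_permutes by blast
  have fWC: "finite (W - C)" by simp
  have permq: "permutation q" using qperm fWC permutation_permutes by blast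
  have sg: "sign (c \<circ> q) = sign c * sign q" by (rule sign_compose[OF permc permq])
  have fW: "finite W" by simp
  have "(\<Prod>i\<in>W. skew_entry A i ((c \<circ> q) i)) =
        (\<Prod>i\<in>W - C. skew_entry A i ((c \<circ> q) i)) * (\<Prod>i\<in>C. skew_entry A i ((c \<circ> q) i))"
    by (rule prod.subset_diff[OF CW fW])
  also have "(\<Prod>i\<in>W - C. skew_entry A i ((c \<circ> q) i)) = (\<Prod>i\<in>W - C. skew_entry A i (q i))"
  proof (rule prod.cong[OF refl])
    fix i assume "i \<in> W - C"
    then have "q i \<in> W - C" using permutes_in_image[OF qperm] by simp
    then show "skew_entry A i ((c \<circ> q) i) = skew_entry A i (q i)" using cout by simp
  qed
  also have "(\<Prod>i\<in>C. skew_entry A i ((c \<circ> q) i)) = (\<Prod>i\<in>C. skew_entry A i (c i))"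
    by (rule prod.cong) (auto simp: qC)
  finally have pr: "(\<Prod>i\<in>W. skew_entry A i ((c \<circ> q) i)) =
     (\<Prod>i\<in>W - C. skew_entry A i (q i)) * (\<Prod>i\<in>C. skew_entry A i (c i))" .
  have IIq: "of_int (sign q) * (\<Prod>i\<in>W - C. skew_entry A i (q i)) = (1::real)"
    by (rule II_value[OF og _ q]) simp
  show "of_int (sign (c \<circ> q)) * (\<Prod>i\<in>W. skew_entry A i ((c \<circ> q) i))
       = of_int (sign c) * (\<Prod>y\<in>C. skew_entry A y (c y))"
    unfolding pr sg using IIq by (simp add: algebra_simps)
qed

end



context uc begin

lemma det_formula:
  "det (tW (skew_adj A) W) = real (card (II A W)) +
     (if C \<subseteq> W then real (card (II A (W - C))) *
        ((-1) ^ (k - 1) * eps + (-1) ^ (k - 1) * ((-1) ^ k * eps)) else 0)"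
proof -
  define f :: "('v \<Rightarrow> 'v) \<Rightarrow> real" where
    "f p = of_int (sign p) * (\<Prod>i\<in>W. skew_entry A i (p i))" for p
  have fW: "finite W" by simp
  have finPP: "finite (PP A W)"
    by (rule finite_subset[of _ "{p. p permutes W}"]) (auto simp: PP_def finite_permutations[OF fW])
  have IIsub: "II A W \<subseteq> PP A W" by (auto simp: II_def)
  have det: "det (tW (skew_adj A) W) = sum f (PP A W)"
    unfolding det_tW_expand f_def ..
  have split: "sum f (PP A W) = sum f (PP A W - II A W) + sum f (II A W)"
    by (rule sum.subset_diff[OF IIsub finPP])
  have sII: "sum f (II A W) = real (card (II A W))"
  proof -
    have "sum f (II A W) = sum (\<lambda>p. 1) (II A W)"
      by (rule sum.cong[OF refl]) (simp add: f_def II_value[OF og fW])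
    then show ?thesis by simp
  qed
  have rest: "sum f (PP A W - II A W) =
     (if C \<subseteq> W then real (card (II A (W - C))) *
        ((-1) ^ (k - 1) * eps + (-1) ^ (k - 1) * ((-1) ^ k * eps)) else 0)"
  proof (cases "C \<subseteq> W")
    case False
    have "PP A W - II A W = {}"
    proof (rule ccontr)
      assume "PP A W - II A W \<noteq> {}"
      then obtain p where p: "p \<in> PP A W" "p \<notin> II A W" by blast
      then have "\<not> (\<forall>i. p (p i) = i)" by (simp add: II_def)
      then show False using str[OF p(1)] False by blast
    qed
    then have "sum f (PP A W - II A W) = 0" by (simp only: sum.empty)
    then show ?thesis using False by simp
  next
    case CW: True
    define Q where "Q = II A (W - C)"
    have finQ: "finite Q"
      by (rule finite_subset[of _ "{p. p permutes (W - C)}"])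
         (auto simp: Q_def II_def PP_def finite_permutations)
    define G1 where "G1 = (\<lambda>q. cf \<circ> q) ` Q"
    define G2 where "G2 = (\<lambda>q. cb \<circ> q) ` Q"
    have eq: "PP A W - II A W = G1 \<union> G2"
    proof
      show "PP A W - II A W \<subseteq> G1 \<union> G2"
      proof
        fix p assume "p \<in> PP A W - II A W"
        then have p: "p \<in> PP A W" "\<not> (\<forall>i. p (p i) = i)" by (auto simp: II_def)
        then obtain q where "q \<in> Q" "p = cf \<circ> q \<or> p = cb \<circ> q"
          using str[OF p(1) p(2)] Q_def by blast
        then show "p \<in> G1 \<union> G2" by (auto simp: G1_def G2_def)
      qed
    next
      show "G1 \<union> G2 \<subseteq> PP A W - II A W"
      proof
        fix p assume "p \<in> G1 \<union> G2"
        then obtain q c where q: "q \<in> Q" and c: "c = cf \<or> c = cb" and pe: "p = c \<circ> q"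
          by (auto simp: G1_def G2_def)
        have "p \<in> PP A W" using conv(1)[OF CW _ c] q pe Q_def by simp
        moreover have "p \<notin> II A W" using conv(2)[OF CW _ c] q pe Q_def by (auto simp: II_def)
        ultimately show "p \<in> PP A W - II A W" by simp
      qed
    qed
    have injc: "inj_on (\<lambda>q. c \<circ> q) Q" if c: "c = cf \<or> c = cb" for c
    proof (rule inj_onI)
      fix q q' assume "c \<circ> q = c \<circ> q'"
      moreover have "inj c" using c permutes_inj[OF cf_perm] permutes_inj[OF cb_perm] by auto
      ultimately show "q = q'" by (auto simp: fun_eq_iff dest: injD)
    qed
    have c0: "cs ! 0 \<in> C" using kpos by simp
    have disj: "G1 \<inter> G2 = {}"
    proof (rule ccontr)
      assume "G1 \<inter> G2 \<noteq> {}"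
      then obtain q q' where q: "q \<in> Q" "q' \<in> Q" and e: "cf \<circ> q = cb \<circ> q'"
        by (auto simp: G1_def G2_def)
      have "q (cs ! 0) = cs ! 0" "q' (cs ! 0) = cs ! 0"
        using q c0 by (auto simp: Q_def II_def PP_def permutes_not_in)
      then have "cf (cs ! 0) = cb (cs ! 0)" using e by (metis comp_apply)
      then show False using cf_ne_cb[OF c0] by simp
    qed
    have val: "sum f ((\<lambda>q. c \<circ> q) ` Q) = real (card Q) * (of_int (sign c) * (\<Prod>y\<in>C. skew_entry A y (c y)))"
      if c: "c = cf \<or> c = cb" for c
    proof -
      have "sum f ((\<lambda>q. c \<circ> q) ` Q) = sum (\<lambda>q. f (c \<circ> q)) Q"
        using sum.reindex[OF injc[OF c]] by (simp add: comp_def)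
      also have "\<dots> = sum (\<lambda>q. of_int (sign c) * (\<Prod>y\<in>C. skew_entry A y (c y))) Q"
      proof (rule sum.cong[OF refl])
        fix q assume "q \<in> Q"
        then show "f (c \<circ> q) = of_int (sign c) * (\<Prod>y\<in>C. skew_entry A y (c y))"
          unfolding f_def Q_def by (rule conv(3)[OF CW _ c])
      qed
      finally show ?thesis by simp
    qed
    have "sum f (PP A W - II A W) = sum f G1 + sum f G2"
      unfolding eq by (rule sum.union_disjoint) (use finQ disj in \<open>auto simp: G1_def G2_def\<close>)
    also have "sum f G1 = real (card Q) * ((-1) ^ (k - 1) * eps)"
      unfolding G1_def using val[of cf] by (simp add: sign_cf prod_cf)
    also have "sum f G2 = real (card Q) * ((-1) ^ (k - 1) * ((-1) ^ k * eps))"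
      unfolding G2_def using val[of cb] by (simp add: sign_cb prod_cb)
    finally show ?thesis using CW Q_def by (simp add: algebra_simps)
  qed
  show ?thesis using det split sII rest by simp
qed

end



definition PM :: "('v \<times> 'v) set \<Rightarrow> 'v set \<Rightarrow> 'v set set set" where
  "PM A W = {M. matching_in A W M \<and> \<Union>M = W}"

lemma edgesE:
  assumes "oriented_graph A" "e \<in> edges A"
  obtains u v where "e = {u, v}" "adj A u v" "u \<noteq> v"
proof -
  from assms(2) obtain u v where e: "e = {u, v}" "(u, v) \<in> A \<or> (v, u) \<in> A"
    by (auto simp: edges_def)
  then have "adj A u v" by (simp add: adj_def)
  moreover have "u \<noteq> v" using assms(1) e(2) by (auto simp: oriented_graph_def)
  ultimately show thesis using that e(1) by blast
qed

lemma edgesI: "adj A u v \<Longrightarrow> {u, v} \<in> edges A"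
  by (auto simp: edges_def adj_def)

lemma matching_disj: "matching_in A W M \<Longrightarrow> e \<in> M \<Longrightarrow> f \<in> M \<Longrightarrow> e \<noteq> f \<Longrightarrow> e \<inter> f = {}"
  by (auto simp: matching_in_def)

lemma matching_sub: "matching_in A W M \<Longrightarrow> e \<in> M \<Longrightarrow> e \<subseteq> W \<and> e \<in> edges A"
  by (auto simp: matching_in_def)

lemma matching_mono: "matching_in A W M \<Longrightarrow> W \<subseteq> W' \<Longrightarrow> matching_in A W' M"
  by (auto simp: matching_in_def)

lemma card_Union_matching:
  fixes M :: "'v::finite set set"
  assumes og: "oriented_graph A" and m: "matching_in A W M"
  shows "card (\<Union>M) = 2 * card M"
proof -
  have "card (\<Union>M) = sum card M"
  proof (rule card_Union_disjoint)
    show "pairwise disjnt M" using m by (auto simp: pairwise_def disjnt_def matching_in_def)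
    show "\<And>a. a \<in> M \<Longrightarrow> finite a" by simp
  qed
  also have "\<dots> = sum (\<lambda>e. 2) M"
  proof (rule sum.cong[OF refl])
    fix e assume "e \<in> M"
    then have "e \<in> edges A" using matching_sub[OF m] by blast
    then obtain u v where "e = {u, v}" "u \<noteq> v" using edgesE[OF og] by metis
    then show "card e = 2" by simp
  qed
  finally show ?thesis by simp
qed

lemma even_card_PM:
  fixes A :: "('v::finite \<times> 'v) set"
  assumes og: "oriented_graph A" and M: "M \<in> PM A W"
  shows "card W = 2 * card M"
  using card_Union_matching[OF og, of W M] M by (simp add: PM_def)

lemma finite_matchings: "finite {card M | M. matching_in A W (M :: 'v::finite set set)}"
proof -
  have "finite {M :: 'v set set. matching_in A W M}" by simp
  then show ?thesis by (rule finite_image_set)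
qed

lemma matching_le_number:
  fixes A :: "('v::finite \<times> 'v) set"
  assumes "matching_in A W M"
  shows "card M \<le> matching_number A UNIV"
proof -
  have "matching_in A UNIV M" using matching_mono[OF assms] by simp
  then show ?thesis unfolding matching_number_def
    by (intro Max_ge[OF finite_matchings]) blast
qed

lemma max_matching_exists:
  fixes A :: "('v::finite \<times> 'v) set"
  shows "\<exists>M. matching_in A UNIV M \<and> card M = matching_number A UNIV"
proof -
  have ne: "{card M | M. matching_in A UNIV (M :: 'v set set)} \<noteq> {}"
    using matching_in_def[of A UNIV "{}"] by auto
  show ?thesis
    using Max_in[OF finite_matchings ne] unfolding matching_number_def by auto
qed

lemma card_II_PM:
  fixes A :: "('v::finite \<times> 'v) set"
  assumes og: "oriented_graph A"
  shows "card (II A W) = card (PM A W)"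
proof -
  define phi where "phi p = {{i, p i} | i. i \<in> W}" for p :: "'v \<Rightarrow> 'v"
  have pair_eq: "{i, p i} = {j, p j}" if p: "p \<in> II A W" and ij: "{i, p i} \<inter> {j, p j} \<noteq> {}" for p i j
  proof -
    have inv: "\<forall>x. p (p x) = x" using p by (simp add: II_def)
    from ij have "i = j \<or> i = p j \<or> p i = j \<or> p i = p j" by auto
    then show ?thesis
    proof (elim disjE)
      assume "i = p j" then show ?thesis using inv by auto
    next
      assume "p i = j" then show ?thesis using inv by auto
    next
      assume "p i = p j" then have "i = j" using inv by metis
      then show ?thesis by simp
    qed simp
  qed
  have phiPM: "phi p \<in> PM A W" if p: "p \<in> II A W" for p
  proof -
    have pW: "p permutes W" and padj: "\<forall>i\<in>W. adj A i (p i)" using p by (auto simp: II_def PP_def)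
    have "matching_in A W (phi p)"
      unfolding matching_in_def
    proof (intro conjI ballI impI)
      show "phi p \<subseteq> {e \<in> edges A. e \<subseteq> W}"
        using padj pW by (auto simp: phi_def permutes_in_image intro!: edgesI)
      fix e f assume e: "e \<in> phi p" and f: "f \<in> phi p" and ne: "e \<noteq> f"
      obtain i where i: "e = {i, p i}" using e by (auto simp: phi_def)
      obtain j where j: "f = {j, p j}" using f by (auto simp: phi_def)
      show "e \<inter> f = {}" using pair_eq[OF p, of i j] i j ne by blast
    qed
    moreover have "\<Union>(phi p) = W"
      using pW by (auto simp: phi_def permutes_in_image)
    ultimately show ?thesis by (simp add: PM_def)
  qed
  have inj: "inj_on phi (II A W)"
  proof (rule inj_onI)
    fix p p' assume p: "p \<in> II A W" and p': "p' \<in> II A W" and e: "phi p = phi p'"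
    have pW: "p permutes W" and inv: "\<forall>x. p (p x) = x" using p by (auto simp: II_def PP_def)
    have pW': "p' permutes W" and inv': "\<forall>x. p' (p' x) = x" using p' by (auto simp: II_def PP_def)
    show "p = p'"
    proof
      fix i show "p i = p' i"
      proof (cases "i \<in> W")
        case False then show ?thesis using pW pW' by (simp add: permutes_not_in)
      next
        case True
        then have "{i, p i} \<in> phi p'" using e by (auto simp: phi_def)
        then obtain j where j: "{i, p i} = {j, p' j}" by (auto simp: phi_def)
        then have "(i = j \<and> p i = p' j) \<or> (i = p' j \<and> p i = j)" by (auto simp: doubleton_eq_iff)
        then show ?thesis using inv' by auto
      qed
    qed
  qed
  have surj: "PM A W \<subseteq> phi ` II A W"
  proof
    fix M assume M: "M \<in> PM A W"
    have m: "matching_in A W M" and U: "\<Union>M = W" using M by (auto simp: PM_def)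
    have ex: "\<exists>j. {i, j} \<in> M" if iW: "i \<in> W" for i
    proof -
      obtain e where e: "e \<in> M" "i \<in> e" using U iW by blast
      obtain u v where uv: "e = {u, v}" using matching_sub[OF m e(1)] edgesE[OF og] by metis
      show ?thesis using e uv by (metis insert_commute insertE singletonD)
    qed
    have uniq: "j = j'" if "{i, j} \<in> M" "{i, j'} \<in> M" for i j j'
    proof -
      have "{i, j} = {i, j'}" using matching_disj[OF m that] by blast
      then show ?thesis by (auto simp: doubleton_eq_iff)
    qed
    define p where "p i = (if i \<in> W then (THE j. {i, j} \<in> M) else i)" for i
    have pM: "{i, p i} \<in> M" if iW: "i \<in> W" for i
    proof -
      obtain j where "{i, j} \<in> M" using ex[OF iW] by blast
      then have "(THE j. {i, j} \<in> M) = j" using uniq by blast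
      then show ?thesis using \<open>{i, j} \<in> M\<close> iW by (simp add: p_def)
    qed
    have pWin: "p i \<in> W" if "i \<in> W" for i
      using matching_sub[OF m pM[OF that]] by auto
    have pinv: "p (p i) = i" for i
    proof (cases "i \<in> W")
      case True
      have "{p i, i} \<in> M" using pM[OF True] by (simp add: insert_commute)
      moreover have "{p i, p (p i)} \<in> M" using pM[OF pWin[OF True]] .
      ultimately show ?thesis using uniq by blast
    next
      case False then show ?thesis by (simp add: p_def)
    qed
    have padj: "adj A i (p i)" if "i \<in> W" for i
    proof -
      have "{i, p i} \<in> edges A" using matching_sub[OF m pM[OF that]] by blast
      then obtain u v where "{i, p i} = {u, v}" "adj A u v" using edgesE[OF og] by metis
      then show ?thesis by (auto simp: doubleton_eq_iff adj_def)
    qed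
    have pperm: "p permutes W"
      by (rule permutes_involution[OF pinv]) (simp add: p_def)
    have pII: "p \<in> II A W" using pperm padj pinv by (simp add: II_def PP_def)
    have "phi p = M"
    proof
      show "phi p \<subseteq> M" using pM by (auto simp: phi_def)
      show "M \<subseteq> phi p"
      proof
        fix e assume e: "e \<in> M"
        obtain u v where uv: "e = {u, v}" using matching_sub[OF m e] edgesE[OF og] by metis
        have uW: "u \<in> W" using matching_sub[OF m e] uv by auto
        have "p u = v" using uniq[OF pM[OF uW], of v] e uv by simp
        then show "e \<in> phi p" using uW uv by (auto simp: phi_def)
      qed
    qed
    then show "M \<in> phi ` II A W" using pII by blast
  qed
  have "phi ` II A W = PM A W" using phiPM surj by blast
  then show ?thesis using card_image[OF inj] by simp
qed




context uc begin

definition Mc1 :: "'v set set" where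
  "Mc1 = {{cs ! (2 * i), cs ! (2 * i + 1)} | i. i < k div 2}"

definition Mc2 :: "'v set set" where
  "Mc2 = (\<lambda>e. cf ` e) ` Mc1"

lemma nth_inj: "a < k \<Longrightarrow> b < k \<Longrightarrow> cs ! a = cs ! b \<longleftrightarrow> a = b"
  using nth_eq_iff_index_eq[OF dist] by blast

lemma Mc1_PM:
  assumes ev: "even k"
  shows "Mc1 \<in> PM A C"
proof -
  have idx: "2 * i + 1 < k" if "i < k div 2" for i using that ev by (auto elim!: evenE)
  have edge: "{cs ! (2 * i), cs ! (2 * i + 1)} \<in> edges A" if i: "i < k div 2" for i
  proof -
    have all: "\<forall>j<k. adj A (cs ! j) (cs ! ((j + 1) mod k))" using cyc unfolding is_cycle_def by blast
    have l: "2 * i < k" using idx[OF i] by linarith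
    have "adj A (cs ! (2 * i)) (cs ! ((2 * i + 1) mod k))" using all l by blast
    moreover have "(2 * i + 1) mod k = 2 * i + 1" using idx[OF i] by (rule mod_less)
    ultimately show ?thesis by (simp add: edgesI)
  qed
  have m: "matching_in A C Mc1"
    unfolding matching_in_def
  proof (intro conjI ballI impI)
    show "Mc1 \<subseteq> {e \<in> edges A. e \<subseteq> C}"
      using edge idx by (auto simp: Mc1_def)
    fix e f assume e: "e \<in> Mc1" and f: "f \<in> Mc1" and ne: "e \<noteq> f"
    obtain i where i: "i < k div 2" "e = {cs ! (2 * i), cs ! (2 * i + 1)}" using e by (auto simp: Mc1_def)
    obtain j where j: "j < k div 2" "f = {cs ! (2 * j), cs ! (2 * j + 1)}" using f by (auto simp: Mc1_def)
    have ij: "i \<noteq> j" using ne i j by auto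
    have a: "2 * i < k" "2 * i + 1 < k" "2 * j < k" "2 * j + 1 < k" using idx i j by auto
    show "e \<inter> f = {}"
      using i(2) j(2) ij a nth_inj by auto
  qed
  have "\<Union>Mc1 = C"
  proof
    show "\<Union>Mc1 \<subseteq> C" using m by (auto simp: matching_in_def)
    show "C \<subseteq> \<Union>Mc1"
    proof
      fix y assume "y \<in> C"
      then obtain a where a: "a < k" "y = cs ! a" by (auto simp: in_set_conv_nth)
      define i where "i = a div 2"
      have i: "i < k div 2" using a ev i_def by (auto elim!: evenE)
      have "a = 2 * i \<or> a = 2 * i + 1" using i_def by auto
      then have "y \<in> {cs ! (2 * i), cs ! (2 * i + 1)}" using a by auto
      then show "y \<in> \<Union>Mc1" using i by (auto simp: Mc1_def)
    qed
  qed
  then show ?thesis using m by (simp add: PM_def)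
qed

lemma Mc1_elem: "e \<in> Mc1 \<Longrightarrow> even k \<Longrightarrow> \<exists>y\<in>C. e = {y, cf y}"
proof -
  assume "e \<in> Mc1" "even k"
  then obtain i where i: "i < k div 2" "e = {cs ! (2 * i), cs ! (2 * i + 1)}" by (auto simp: Mc1_def)
  have a: "2 * i + 1 < k" using i \<open>even k\<close> by (auto elim!: evenE)
  then have "cf (cs ! (2 * i)) = cs ! (2 * i + 1)" using cf_nth[of "2 * i"] by simp
  moreover have "cs ! (2 * i) \<in> C" using a by simp
  ultimately show ?thesis using i by metis
qed

lemma Mc2_PM:
  assumes ev: "even k"
  shows "Mc2 \<in> PM A C"
proof -
  have m1: "matching_in A C Mc1" and u1: "\<Union>Mc1 = C" using Mc1_PM[OF ev] by (auto simp: PM_def)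
  have injcf: "inj cf" using permutes_inj[OF cf_perm] .
  have m: "matching_in A C Mc2"
    unfolding matching_in_def
  proof (intro conjI ballI impI)
    show "Mc2 \<subseteq> {e \<in> edges A. e \<subseteq> C}"
    proof
      fix e' assume "e' \<in> Mc2"
      then obtain e where e: "e \<in> Mc1" "e' = cf ` e" by (auto simp: Mc2_def)
      then obtain y where y: "y \<in> C" "e = {y, cf y}" using Mc1_elem ev by blast
      have "e' = {cf y, cf (cf y)}" using e y by simp
      moreover have "adj A (cf y) (cf (cf y))" using adj_cf cf_in y by simp
      ultimately show "e' \<in> {e \<in> edges A. e \<subseteq> C}" using cf_in y by (auto intro: edgesI)
    qed
    fix e' f' assume e': "e' \<in> Mc2" and f': "f' \<in> Mc2" and ne: "e' \<noteq> f'"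
    obtain e where e: "e \<in> Mc1" "e' = cf ` e" using e' by (auto simp: Mc2_def)
    obtain f where f: "f \<in> Mc1" "f' = cf ` f" using f' by (auto simp: Mc2_def)
    have "e \<noteq> f" using ne e f by auto
    then have "e \<inter> f = {}" using matching_disj[OF m1 e(1) f(1)] by simp
    then show "e' \<inter> f' = {}" using e f image_Int[OF injcf] by (metis image_empty)
  qed
  have "\<Union>Mc2 = cf ` \<Union>Mc1" by (auto simp: Mc2_def)
  also have "\<dots> = C" using u1 cycle_is_surj[OF dist] by simp
  finally show ?thesis using m by (simp add: PM_def)
qed

lemma Mc_ne:
  assumes ev: "even k"
  shows "Mc1 \<noteq> Mc2"
proof
  assume eq: "Mc1 = Mc2"
  have k4: "k \<ge> 4" using k3 ev by (auto elim!: evenE)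
  have "{cs ! 0, cs ! 1} \<in> Mc1" unfolding Mc1_def using k4
    by (auto intro!: exI[of _ 0])
  then have "{cs ! 0, cs ! 1} \<in> Mc2" using eq by simp
  then obtain e where e: "e \<in> Mc1" "{cs ! 0, cs ! 1} = cf ` e" by (auto simp: Mc2_def)
  obtain i where i: "i < k div 2" "e = {cs ! (2 * i), cs ! (2 * i + 1)}" using e(1) by (auto simp: Mc1_def)
  have a: "2 * i + 1 < k" using i ev by (auto elim!: evenE)
  have "cf ` e = {cs ! (2 * i + 1), cs ! ((2 * i + 2) mod k)}"
    using i(2) a cf_nth[of "2 * i"] cf_nth[of "2 * i + 1"] by simp
  then have "cs ! (2 * i + 1) \<in> {cs ! 0, cs ! 1}" using e(2) by simp
  then have "2 * i + 1 = 0 \<or> 2 * i + 1 = 1"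
    using a k4 csne nth_inj[of "2 * i + 1" 0] nth_inj[of "2 * i + 1" 1] by auto
  then have i0: "i = 0" by simp
  have "cs ! ((2 * i + 2) mod k) \<in> {cs ! 0, cs ! 1}"
    using e(2) \<open>cf ` e = _\<close> by simp
  moreover have "(2 * i + 2) mod k = 2" using i0 k4 by simp
  ultimately have "cs ! 2 \<in> {cs ! 0, cs ! 1}" by simp
  then show False using k4 csne nth_inj[of 2 0] nth_inj[of 2 1] by auto
qed

lemma abs_skew_adj: "adj A u v \<Longrightarrow> \<bar>skew_entry A u v\<bar> = 1"
  by (auto simp: skew_entry_def adj_def)

lemma eps_cases: "eps = 1 \<or> eps = -1"
proof -
  have "\<bar>eps\<bar> = (\<Prod>i<k. \<bar>skew_entry A (cs ! i) (cs ! ((i + 1) mod k))\<bar>)"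
    unfolding eps_def by (rule abs_prod)
  also have "\<dots> = (\<Prod>i<k. 1)"
    by (rule prod.cong[OF refl]) (use cyc in \<open>auto simp: is_cycle_def abs_skew_adj\<close>)
  finally show ?thesis by auto
qed

lemma det_pm:
  "det (tW (skew_adj A) W) = real (card (PM A W)) +
     (if C \<subseteq> W then real (card (PM A (W - C))) * (if even k then - 2 * eps else 0) else 0)"
proof -
  have c0: "((-1) ^ (k - 1) * eps + (-1) ^ (k - 1) * ((-1) ^ k * eps)) =
        (if even k then - 2 * eps else (0::real))"
  proof (cases "even k")
    case True
    then have "odd (k - 1)" using kpos by simp
    then show ?thesis using True by simp
  next
    case False
    then have "even (k - 1)" using kpos by simp
    then show ?thesis using False by simp
  qed
  show ?thesis using det_formula[of W] c0 card_II_PM[OF og] by simp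
qed

end



lemma edge_ne: "e \<in> edges A \<Longrightarrow> e \<noteq> {}"
  by (auto simp: edges_def)

context uc begin

abbreviation "bb \<equiv> matching_number A UNIV"
abbreviation "D W \<equiv> det (tW (skew_adj A) W)"

lemma ext_PM:
  assumes CW: "C \<subseteq> W" and M': "M' \<in> PM A (W - C)" and X: "X \<in> PM A C"
  shows "M' \<union> X \<in> PM A W"
proof -
  have m': "matching_in A (W - C) M'" and u': "\<Union>M' = W - C" using M' by (auto simp: PM_def)
  have mx: "matching_in A C X" and ux: "\<Union>X = C" using X by (auto simp: PM_def)
  have "matching_in A W (M' \<union> X)"
    unfolding matching_in_def
  proof (intro conjI ballI impI)
    show "M' \<union> X \<subseteq> {e \<in> edges A. e \<subseteq> W}"
    proof
      fix e assume "e \<in> M' \<union> X"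
      then show "e \<in> {e \<in> edges A. e \<subseteq> W}"
      proof
        assume "e \<in> M'"
        then have "e \<in> edges A" "e \<subseteq> W - C" using matching_sub[OF m'] by auto
        then show ?thesis by auto
      next
        assume "e \<in> X"
        then have "e \<in> edges A" "e \<subseteq> C" using matching_sub[OF mx] by auto
        then show ?thesis using CW by auto
      qed
    qed
    fix e f assume e: "e \<in> M' \<union> X" and f: "f \<in> M' \<union> X" and ne: "e \<noteq> f"
    show "e \<inter> f = {}"
    proof (cases "e \<in> M'")
      case True
      show ?thesis
      proof (cases "f \<in> M'")
        case True then show ?thesis using \<open>e \<in> M'\<close> ne matching_disj[OF m'] by blast
      next
        case False then have "f \<in> X" using f by simp
        then show ?thesis using True u' ux by blast
      qed
    next
      case False
      then have eX: "e \<in> X" using e by simp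
      show ?thesis
      proof (cases "f \<in> M'")
        case True then show ?thesis using eX u' ux by blast
      next
        case False then have "f \<in> X" using f by simp
        then show ?thesis using eX ne matching_disj[OF mx] by blast
      qed
    qed
  qed
  moreover have "\<Union>(M' \<union> X) = W" using u' ux CW by auto
  ultimately show ?thesis by (simp add: PM_def)
qed

lemma pm_ge:
  assumes ev: "even k" and CW: "C \<subseteq> W"
  shows "2 * card (PM A (W - C)) \<le> card (PM A W)"
proof -
  define g where "g x = fst x \<union> (if snd x then Mc1 else Mc2)" for x :: "'v set set \<times> bool"
  have X: "(if b then Mc1 else Mc2) \<in> PM A C" for b using Mc1_PM[OF ev] Mc2_PM[OF ev] by simp
  have sep1: "{e \<in> M' \<union> (if b then Mc1 else Mc2). e \<inter> C = {}} = M'" if M': "M' \<in> PM A (W - C)" for M' b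
  proof -
    have "e \<inter> C = {}" if "e \<in> M'" for e using M' that by (auto simp: PM_def)
    moreover have "e \<inter> C \<noteq> {}" if "e \<in> (if b then Mc1 else Mc2)" for e
    proof -
      have "e \<subseteq> C" "e \<in> edges A" using X[of b] that by (auto simp: PM_def matching_in_def)
      then show ?thesis using edge_ne by blast
    qed
    ultimately show ?thesis by blast
  qed
  have sep2: "{e \<in> M' \<union> (if b then Mc1 else Mc2). e \<inter> C \<noteq> {}} = (if b then Mc1 else Mc2)"
    if M': "M' \<in> PM A (W - C)" for M' b
  proof -
    have "e \<inter> C = {}" if "e \<in> M'" for e using M' that by (auto simp: PM_def)
    moreover have "e \<inter> C \<noteq> {}" if "e \<in> (if b then Mc1 else Mc2)" for e
    proof -
      have "e \<subseteq> C" "e \<in> edges A" using X[of b] that by (auto simp: PM_def matching_in_def)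
      then show ?thesis using edge_ne by blast
    qed
    ultimately show ?thesis by blast
  qed
  have inj: "inj_on g (PM A (W - C) \<times> UNIV)"
  proof (rule inj_onI)
    fix x y assume x: "x \<in> PM A (W - C) \<times> UNIV" and y: "y \<in> PM A (W - C) \<times> UNIV" and e: "g x = g y"
    obtain M' b where xe: "x = (M', b)" by (cases x)
    obtain N' c where ye: "y = (N', c)" by (cases y)
    have M': "M' \<in> PM A (W - C)" and N': "N' \<in> PM A (W - C)" using x y xe ye by auto
    have e': "M' \<union> (if b then Mc1 else Mc2) = N' \<union> (if c then Mc1 else Mc2)" using e xe ye by (simp add: g_def)
    have "M' = N'" using sep1[OF M', of b] sep1[OF N', of c] e' by simp
    moreover have "(if b then Mc1 else Mc2) = (if c then Mc1 else Mc2)"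
      using sep2[OF M', of b] sep2[OF N', of c] e' by simp
    then have "b = c" using Mc_ne[OF ev] by (cases b; cases c) auto
    ultimately show "x = y" using xe ye by simp
  qed
  have img: "g ` (PM A (W - C) \<times> UNIV) \<subseteq> PM A W"
    using ext_PM[OF CW] X by (auto simp: g_def)
  have "card (PM A (W - C) \<times> (UNIV :: bool set)) \<le> card (PM A W)"
    by (rule card_inj_on_le[OF inj img]) simp
  then show ?thesis by (simp add: card_cartesian_product mult.commute)
qed

lemma skewS: "(skew_adj A) $ i $ j = - (skew_adj A) $ j $ i"
  using skew_antisym[OF og, of i j] by simp

lemma pm_zero_if: "(\<forall>M. M \<notin> PM A W) \<Longrightarrow> card (PM A W) = 0"
  by simp

lemma D_odd:
  assumes "odd (card W)"
  shows "D W = 0"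
proof -
  have z1: "card (PM A W) = 0"
  proof -
    have "M \<notin> PM A W" for M
    proof
      assume "M \<in> PM A W"
      then have "card W = 2 * card M" by (rule even_card_PM[OF og])
      then show False using assms by simp
    qed
    then have "PM A W = {}" by blast
    then show ?thesis by simp
  qed
  have z2: "card (PM A (W - C)) = 0" if "C \<subseteq> W" "even k"
  proof -
    have "card (W - C) = card W - k"
      using that(1) by (simp add: card_Diff_subset distinct_card[OF dist])
    moreover have "k \<le> card W" using that(1) card_mono[of W C] distinct_card[OF dist] by simp
    ultimately have "odd (card (W - C))" using assms that(2) by simp
    have "M \<notin> PM A (W - C)" for M
    proof
      assume "M \<in> PM A (W - C)"
      then have "card (W - C) = 2 * card M" by (rule even_card_PM[OF og])
      then show False using \<open>odd (card (W - C))\<close> by simp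
    qed
    then have "PM A (W - C) = {}" by blast
    then show ?thesis by simp
  qed
  show ?thesis using det_pm[of W] z1 z2 by auto
qed

lemma D_big:
  assumes "2 * bb < card W"
  shows "D W = 0"
proof -
  have z1: "card (PM A W) = 0"
  proof -
    have "M \<notin> PM A W" for M
    proof
      assume M: "M \<in> PM A W"
      then have "card W = 2 * card M" by (rule even_card_PM[OF og])
      moreover have "card M \<le> bb" using M by (intro matching_le_number) (auto simp: PM_def)
      ultimately show False using assms by simp
    qed
    then have "PM A W = {}" by blast
    then show ?thesis by simp
  qed
  have z2: "card (PM A (W - C)) = 0" if "C \<subseteq> W" "even k"
    using pm_ge[OF that(2) that(1)] z1 by simp
  show ?thesis using det_pm[of W] z1 z2 by auto
qed

lemma rank_le: "skew_rank A \<le> 2 * bb"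
proof -
  obtain W where W: "card W = skew_rank A" "D W \<noteq> 0"
    using skew_rank_witness[of "skew_adj A", OF skewS] unfolding skew_rank_def by blast
  show ?thesis
  proof (rule ccontr)
    assume "\<not> skew_rank A \<le> 2 * bb"
    then have "D W = 0" using W(1) by (intro D_big) simp
    then show False using W(2) by simp
  qed
qed

lemma rank_ge: "D W \<noteq> 0 \<Longrightarrow> card W \<le> skew_rank A"
  unfolding skew_rank_def by (rule det_tW_card_le_rank)

lemma rank_even: "even (skew_rank A)"
proof -
  obtain W where W: "card W = skew_rank A" "D W \<noteq> 0"
    using skew_rank_witness[of "skew_adj A", OF skewS] unfolding skew_rank_def by blast
  show ?thesis using D_odd[of W] W by auto
qed

lemma rank_ge_m2: "2 * bb - 2 \<le> skew_rank A"
proof -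
  obtain M0 where M0: "matching_in A UNIV M0" "card M0 = bb" using max_matching_exists by blast
  have "\<exists>e\<in>M0. e \<inter> C \<noteq> {}"
  proof (rule ccontr)
    assume "\<not> (\<exists>e\<in>M0. e \<inter> C \<noteq> {})"
    then have dis: "\<forall>e\<in>M0. e \<inter> C = {}" by blast
    define e0 where "e0 = {cs ! 0, cs ! 1}"
    have "adj A (cs ! 0) (cs ! ((0 + 1) mod k))" using cyc kpos unfolding is_cycle_def by blast
    moreover have "(0 + 1) mod k = 1" using k3 by simp
    ultimately have e0E: "e0 \<in> edges A" by (simp add: e0_def edgesI)
    have k1: "1 < k" using k3 by simp
    have e0C: "e0 \<subseteq> C" using nth_mem[OF kpos] nth_mem[OF k1] by (simp add: e0_def)
    have e0n: "e0 \<notin> M0" using dis e0C edge_ne[OF e0E] by blast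
    have "matching_in A UNIV (insert e0 M0)"
      unfolding matching_in_def
    proof (intro conjI ballI impI)
      show "insert e0 M0 \<subseteq> {e \<in> edges A. e \<subseteq> UNIV}"
        using M0(1) e0E by (auto simp: matching_in_def)
      fix f g assume f: "f \<in> insert e0 M0" and g: "g \<in> insert e0 M0" and ne: "f \<noteq> g"
      show "f \<inter> g = {}"
      proof (cases "f = e0")
        case True
        then have "g \<in> M0" using g ne by simp
        then show ?thesis using True dis e0C by blast
      next
        case False
        then have fM: "f \<in> M0" using f by simp
        show ?thesis
        proof (cases "g = e0")
          case True then show ?thesis using fM dis e0C by blast
        next
          case False then have "g \<in> M0" using g by simp
          then show ?thesis using fM ne matching_disj[OF M0(1)] by blast
        qed
      qed
    qed
    then have "card (insert e0 M0) \<le> bb" by (rule matching_le_number)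
    then show False using M0(2) e0n by simp
  qed
  then obtain e where e: "e \<in> M0" "e \<inter> C \<noteq> {}" by blast
  define W1 where "W1 = \<Union>(M0 - {e})"
  have m1: "matching_in A UNIV (M0 - {e})" using M0(1) by (auto simp: matching_in_def)
  have PM1: "M0 - {e} \<in> PM A W1"
    using m1 by (auto simp: PM_def W1_def matching_in_def)
  have cW1: "card W1 = 2 * bb - 2"
    using even_card_PM[OF og PM1] M0(2) e(1) by simp
  have nC: "\<not> C \<subseteq> W1"
  proof
    assume CW: "C \<subseteq> W1"
    obtain v where v: "v \<in> e" "v \<in> C" using e(2) by blast
    then obtain f where f: "f \<in> M0" "f \<noteq> e" "v \<in> f" using CW W1_def by blast
    then show False using matching_disj[OF M0(1) e(1) f(1)] v by blast
  qed
  have "PM A W1 \<noteq> {}" using PM1 by blast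
  then have "card (PM A W1) > 0" by (simp add: card_gt_0_iff)
  then have pos: "0 < real (card (PM A W1))" by (simp only: of_nat_0_less_iff)
  have "D W1 = real (card (PM A W1))" using det_pm[of W1] nC by simp
  then have "D W1 \<noteq> 0" using pos by linarith
  then have "card W1 \<le> skew_rank A" by (rule rank_ge)
  then show ?thesis using cW1 by simp
qed

end



context uc begin

definition SS :: "'v set set" where "SS = {W. card W = 2 * bb}"

lemma sum1: "num_matchings A UNIV bb = (\<Sum>W\<in>SS. card (PM A W))"
proof -
  have eq: "{M. matching_in A UNIV M \<and> card M = bb} = (\<Union>W\<in>SS. PM A W)"
  proof
    show "{M. matching_in A UNIV M \<and> card M = bb} \<subseteq> (\<Union>W\<in>SS. PM A W)"
    proof
      fix M assume M: "M \<in> {M. matching_in A UNIV M \<and> card M = bb}"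
      then have m: "matching_in A UNIV M" and c: "card M = bb" by auto
      have "M \<in> PM A (\<Union>M)" using m by (auto simp: PM_def matching_in_def)
      moreover have "\<Union>M \<in> SS" using card_Union_matching[OF og m] c by (simp add: SS_def)
      ultimately show "M \<in> (\<Union>W\<in>SS. PM A W)" by blast
    qed
  next
    show "(\<Union>W\<in>SS. PM A W) \<subseteq> {M. matching_in A UNIV M \<and> card M = bb}"
    proof
      fix M assume "M \<in> (\<Union>W\<in>SS. PM A W)"
      then obtain W where W: "W \<in> SS" "M \<in> PM A W" by blast
      have "matching_in A UNIV M" using W(2) matching_mono[of A W M UNIV] by (simp add: PM_def)
      moreover have "card M = bb" using even_card_PM[OF og W(2)] W(1) by (simp add: SS_def)
      ultimately show "M \<in> {M. matching_in A UNIV M \<and> card M = bb}" by simp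
    qed
  qed
  have "num_matchings A UNIV bb = card (\<Union>W\<in>SS. PM A W)"
    unfolding num_matchings_def eq ..
  also have "\<dots> = (\<Sum>W\<in>SS. card (PM A W))"
  proof (rule card_UN_disjoint)
    show "finite SS" by simp
    show "\<forall>W\<in>SS. finite (PM A W)" by simp
    show "\<forall>W\<in>SS. \<forall>W'\<in>SS. W \<noteq> W' \<longrightarrow> PM A W \<inter> PM A W' = {}"
      by (auto simp: PM_def)
  qed
  finally show ?thesis .
qed

lemma bb_ge: "even k \<Longrightarrow> k div 2 \<le> bb"
proof -
  assume ev: "even k"
  have P: "Mc1 \<in> PM A C" by (rule Mc1_PM[OF ev])
  have "k = 2 * card Mc1" using even_card_PM[OF og P] distinct_card[OF dist] by simp
  moreover have "card Mc1 \<le> bb" using P by (intro matching_le_number) (auto simp: PM_def)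
  ultimately show ?thesis by simp
qed

lemma sum2:
  assumes ev: "even k"
  shows "num_matchings A (UNIV - C) (bb - k div 2) =
     (\<Sum>W\<in>SS. if C \<subseteq> W then card (PM A (W - C)) else 0)"
proof -
  define S' where "S' = {W \<in> SS. C \<subseteq> W}"
  have kC: "card C = k" by (rule distinct_card[OF dist])
  have kb: "k div 2 \<le> bb" by (rule bb_ge[OF ev])
  have k2: "k = 2 * (k div 2)" using ev by simp
  have eq: "{M. matching_in A (UNIV - C) M \<and> card M = bb - k div 2} = (\<Union>W\<in>S'. PM A (W - C))"
  proof
    show "{M. matching_in A (UNIV - C) M \<and> card M = bb - k div 2} \<subseteq> (\<Union>W\<in>S'. PM A (W - C))"
    proof
      fix M assume "M \<in> {M. matching_in A (UNIV - C) M \<and> card M = bb - k div 2}"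
      then have m: "matching_in A (UNIV - C) M" and c: "card M = bb - k div 2" by auto
      define W where "W = \<Union>M \<union> C"
      have UM: "\<Union>M \<subseteq> UNIV - C" using m by (auto simp: matching_in_def)
      have WC: "W - C = \<Union>M" using UM by (auto simp: W_def)
      have "M \<in> PM A (W - C)" unfolding WC using m by (auto simp: PM_def matching_in_def)
      moreover have "card W = 2 * bb"
      proof -
        have "card W = card (\<Union>M) + card C"
          unfolding W_def by (rule card_Un_disjoint) (use UM in auto)
        also have "\<dots> = 2 * (bb - k div 2) + k" using card_Union_matching[OF og m] c kC by simp
        also have "\<dots> = 2 * bb" using kb k2 by linarith
        finally show ?thesis .
      qed
      moreover have "C \<subseteq> W" by (auto simp: W_def)
      ultimately show "M \<in> (\<Union>W\<in>S'. PM A (W - C))" by (auto simp: S'_def SS_def)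
    qed
  next
    show "(\<Union>W\<in>S'. PM A (W - C)) \<subseteq> {M. matching_in A (UNIV - C) M \<and> card M = bb - k div 2}"
    proof
      fix M assume "M \<in> (\<Union>W\<in>S'. PM A (W - C))"
      then obtain W where W: "W \<in> SS" "C \<subseteq> W" "M \<in> PM A (W - C)" by (auto simp: S'_def)
      have "matching_in A (UNIV - C) M" using W(3) matching_mono[of A "W - C" M "UNIV - C"]
        by (auto simp: PM_def)
      moreover have "card M = bb - k div 2"
      proof -
        have "card (W - C) = 2 * card M" by (rule even_card_PM[OF og W(3)])
        moreover have "card (W - C) = card W - k" using W(2) kC by (simp add: card_Diff_subset)
        ultimately show ?thesis using W(1) k2 by (simp add: SS_def)
      qed
      ultimately show "M \<in> {M. matching_in A (UNIV - C) M \<and> card M = bb - k div 2}" by simp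
    qed
  qed
  have "num_matchings A (UNIV - C) (bb - k div 2) = card (\<Union>W\<in>S'. PM A (W - C))"
    unfolding num_matchings_def eq ..
  also have "\<dots> = (\<Sum>W\<in>S'. card (PM A (W - C)))"
  proof (rule card_UN_disjoint)
    show "finite S'" by simp
    show "\<forall>W\<in>S'. finite (PM A (W - C))" by simp
    show "\<forall>W\<in>S'. \<forall>W'\<in>S'. W \<noteq> W' \<longrightarrow> PM A (W - C) \<inter> PM A (W' - C) = {}"
    proof (intro ballI impI)
      fix W W' assume W: "W \<in> S'" and W': "W' \<in> S'" and ne: "W \<noteq> W'"
      have "W - C \<noteq> W' - C" using W W' ne by (auto simp: S'_def)
      then show "PM A (W - C) \<inter> PM A (W' - C) = {}" by (auto simp: PM_def)
    qed
  qed
  also have "\<dots> = (\<Sum>W\<in>SS. if C \<subseteq> W then card (PM A (W - C)) else 0)"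
    unfolding S'_def by (rule sum.inter_filter) simp
  finally show ?thesis .
qed

lemma main:
  "skew_rank A =
    (if even (length cs) \<and> evenly_oriented A cs \<and>
        num_matchings A UNIV (matching_number A UNIV) =
          2 * num_matchings A (UNIV - set cs) (matching_number A UNIV - length cs div 2)
     then 2 * matching_number A UNIV - 2
     else 2 * matching_number A UNIV)"
proof -
  have evo: "evenly_oriented A cs \<longleftrightarrow> eps > 0" by (simp add: evenly_oriented_def eps_def)
  have le: "skew_rank A \<le> 2 * bb" by (rule rank_le)
  obtain M0 where M0: "matching_in A UNIV M0" "card M0 = bb" using max_matching_exists by blast
  define W0 where "W0 = \<Union>M0"
  have PM0: "M0 \<in> PM A W0" using M0(1) by (auto simp: PM_def W0_def matching_in_def)
  have cW0: "card W0 = 2 * bb" using even_card_PM[OF og PM0] M0(2) by simp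
  have pm0: "card (PM A W0) > 0"
  proof -
    have "PM A W0 \<noteq> {}" using PM0 by blast
    then show ?thesis by (simp add: card_gt_0_iff)
  qed
  show ?thesis
  proof (cases "even k \<and> eps > 0")
    case False
    have c0: "(if even k then - 2 * eps else 0) \<ge> (0::real)"
    proof (cases "even k")
      case True then have "eps \<le> 0" using False by simp
      then show ?thesis using True by simp
    qed simp
    have "D W0 \<ge> real (card (PM A W0))"
      using det_pm[of W0] c0 by (simp add: mult_nonneg_nonneg)
    then have "D W0 \<noteq> 0" using pm0 by linarith
    then have "2 * bb \<le> skew_rank A" using rank_ge cW0 by fastforce
    then have "skew_rank A = 2 * bb" using le by simp
    then show ?thesis using False evo by auto
  next
    case True
    then have ev: "even k" and e1: "eps = 1" using eps_cases by auto
    have Dform: "D W = real (card (PM A W)) -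
        (if C \<subseteq> W then 2 * real (card (PM A (W - C))) else 0)" for W
      using det_pm[of W] ev e1 by simp
    have Dnn: "D W \<ge> 0" for W
    proof (cases "C \<subseteq> W")
      case True
      then have "2 * card (PM A (W - C)) \<le> card (PM A W)" by (rule pm_ge[OF ev])
      then have "real (2 * card (PM A (W - C))) \<le> real (card (PM A W))"
        by (simp only: of_nat_le_iff)
      then have "2 * real (card (PM A (W - C))) \<le> real (card (PM A W))" by simp
      then show ?thesis using Dform[of W] True by simp
    next
      case False then show ?thesis using Dform[of W] by simp
    qed
    have sumD: "(\<Sum>W\<in>SS. D W) = real (num_matchings A UNIV bb)
                   - 2 * real (num_matchings A (UNIV - C) (bb - k div 2))"
    proof -
      have "(\<Sum>W\<in>SS. D W) = (\<Sum>W\<in>SS. real (card (PM A W)))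
          - (\<Sum>W\<in>SS. (if C \<subseteq> W then 2 * real (card (PM A (W - C))) else 0))"
        unfolding Dform by (rule sum_subtractf)
      also have "(\<Sum>W\<in>SS. real (card (PM A W))) = real (num_matchings A UNIV bb)"
        unfolding sum1 by simp
      also have "(\<Sum>W\<in>SS. (if C \<subseteq> W then 2 * real (card (PM A (W - C))) else 0))
          = (\<Sum>W\<in>SS. 2 * real (if C \<subseteq> W then card (PM A (W - C)) else 0))"
        by (rule sum.cong) auto
      also have "\<dots> = 2 * real (\<Sum>W\<in>SS. if C \<subseteq> W then card (PM A (W - C)) else 0)"
        by (simp only: of_nat_sum sum_distrib_left)
      also have "(\<Sum>W\<in>SS. if C \<subseteq> W then card (PM A (W - C)) else 0)
          = num_matchings A (UNIV - C) (bb - k div 2)"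
        using sum2[OF ev] by simp
      finally show ?thesis .
    qed
    show ?thesis
    proof (cases "num_matchings A UNIV bb = 2 * num_matchings A (UNIV - C) (bb - k div 2)")
      case cond: True
      then have "(\<Sum>W\<in>SS. D W) = 0" using sumD by simp
      then have z: "\<forall>W\<in>SS. D W = 0"
        using sum_nonneg_eq_0_iff[of SS "\<lambda>W. D W"] Dnn by simp
      obtain W where W: "card W = skew_rank A" "D W \<noteq> 0"
        using skew_rank_witness[of "skew_adj A", OF skewS] unfolding skew_rank_def by blast
      have "skew_rank A \<noteq> 2 * bb" using z W by (auto simp: SS_def)
      moreover have "even (skew_rank A)" by (rule rank_even)
      ultimately have "skew_rank A \<le> 2 * bb - 2" using le by (auto elim!: evenE)
      moreover have "2 * bb - 2 \<le> skew_rank A" by (rule rank_ge_m2)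
      ultimately have "skew_rank A = 2 * bb - 2" by simp
      then show ?thesis using cond True evo by simp
    next
      case cond: False
      have "(\<Sum>W\<in>SS. D W) \<noteq> 0"
      proof
        assume "(\<Sum>W\<in>SS. D W) = 0"
        then have "real (num_matchings A UNIV bb) = 2 * real (num_matchings A (UNIV - C) (bb - k div 2))"
          using sumD by simp
        then have "real (num_matchings A UNIV bb) = real (2 * num_matchings A (UNIV - C) (bb - k div 2))"
          by simp
        then have "num_matchings A UNIV bb = 2 * num_matchings A (UNIV - C) (bb - k div 2)"
          by (simp only: of_nat_eq_iff)
        then show False using cond by simp
      qed
      have "\<exists>W\<in>SS. D W \<noteq> 0"
      proof (rule ccontr)
        assume "\<not> (\<exists>W\<in>SS. D W \<noteq> 0)"
        then have "\<forall>W\<in>SS. D W = 0" by blast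
        then have "(\<Sum>W\<in>SS. D W) = 0" by (rule sum.neutral)
        then show False using \<open>(\<Sum>W\<in>SS. D W) \<noteq> 0\<close> by simp
      qed
      then obtain W where W: "W \<in> SS" "D W \<noteq> 0" by blast
      then have "2 * bb \<le> skew_rank A" using rank_ge by (fastforce simp: SS_def)
      then have "skew_rank A = 2 * bb" using le by simp
      then show ?thesis using cond by simp
    qed
  qed
qed

end

theorem theorem4p2:
  fixes A :: "('v::finite \<times> 'v) set" and cs :: "'v list"
  assumes "oriented_graph A"
    and "unicyclic A"
    and "is_cycle A cs"
  shows "skew_rank A =
    (if even (length cs) \<and> evenly_oriented A cs \<and>
        num_matchings A UNIV (matching_number A UNIV) =
          2 * num_matchings A (UNIV - set cs) (matching_number A UNIV - length cs div 2)
     then 2 * matching_number A UNIV - 2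
     else 2 * matching_number A UNIV)"
proof -
  interpret uc A cs using assms by unfold_locales
  show ?thesis by (rule main)
qed


end
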